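(* The first-price-or-free mechanism satisfies $c$-SCP for every integer $c\ge1$.
   Context: Setting (TFM), with unbounded block size. Each user $i$ has a true value $v_i\ge0$ and submits a single bid $b_i\ge0$. A TFM consists of an inclusion rule (run by the miner) and confirmation, payment and miner-revenue rules (run by the blockchain on the included bids). First-price-or-free mechanism: include all bids; let $b_1\ge\dots\ge b_m$ be the included bids. Only the highest bid $b_1$ is confirmed. If $m=1$, the confirmed user pays nothing; if $m\ge2$, the confirmed user pays $b_1$. The miner receives all payment. Strategic players: the miner together with some users may have those users bid untruthfully after seeing all other bids, inject fake bids (true value $0$), and include any set of available bids instead of following the inclusion rule. Utility of a coalition: miner revenue plus $v-p$ for each confirmed transaction of the coalition with true value $v$ and payment $p$. $c$-SCP: for every coalition of the miner with between $1$ and $c$ users, the joint utility is maximized when its users bid truthfully and the miner follows the mechanism, whatever the other users' bids. *)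

theory Defs
  imports Complex_Main "HOL-Library.Multiset"
begin

text \<open>A block is the list of included bid amounts (its order is the order in the block).
  The inclusion rule maps the list of submitted bids to the list of (distinct) positions
  of the submitted bids that the honest miner includes. The confirmation, payment and
  miner-revenue rules are run on the block only.\<close>

record tfm =
  incl :: "real list \<Rightarrow> nat list"
  conf :: "real list \<Rightarrow> nat set"
  pay  :: "real list \<Rightarrow> nat \<Rightarrow> real"
  mrev :: "real list \<Rightarrow> real"

text \<open>Owner of a bid: a non-coalition user, the i-th coalition user, or a fake bid
  injected by the miner (true value 0).\<close>
datatype owner = Other | Member nat | Fake

definition coal_util :: "tfm \<Rightarrow> real list \<Rightarrow> (owner \<times> real) list \<Rightarrow> real" where
  "coal_util M vs T =
     (let B = map snd T in
      mrev M B +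
      (\<Sum>j\<in>{j \<in> conf M B. j < length T}.
         (case fst (T ! j) of
            Member i \<Rightarrow> vs ! i - pay M B j
          | Fake \<Rightarrow> 0 - pay M B j
          | Other \<Rightarrow> 0)))"

definition honest_util :: "tfm \<Rightarrow> real list \<Rightarrow> real list \<Rightarrow> real" where
  "honest_util M vs others =
     (let S = map (\<lambda>i. (Member i, vs ! i)) [0..<length vs] @ map (\<lambda>b. (Other, b)) others
      in coal_util M vs (map (\<lambda>j. S ! j) (incl M (map snd S))))"

definition available :: "real list \<Rightarrow> real list \<Rightarrow> real list \<Rightarrow> (owner \<times> real) list" where
  "available bs others fs =
     map (\<lambda>i. (Member i, bs ! i)) [0..<length bs] @ map (\<lambda>b. (Other, b)) others
     @ map (\<lambda>b. (Fake, b)) fs"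

definition c_SCP :: "tfm \<Rightarrow> nat \<Rightarrow> bool" where
  "c_SCP M c \<longleftrightarrow>
     (\<forall>others vs bs fs T.
        (\<forall>b\<in>set others. b \<ge> 0) \<longrightarrow>
        1 \<le> length vs \<longrightarrow> length vs \<le> c \<longrightarrow> (\<forall>v\<in>set vs. v \<ge> 0) \<longrightarrow>
        length bs = length vs \<longrightarrow> (\<forall>b\<in>set bs. b \<ge> 0) \<longrightarrow>
        (\<forall>b\<in>set fs. b \<ge> 0) \<longrightarrow>
        mset T \<subseteq># mset (available bs others fs) \<longrightarrow>
        coal_util M vs T \<le> honest_util M vs others)"

definition top_idx :: "real list \<Rightarrow> nat" where
  "top_idx B = (LEAST j. j < length B \<and> B ! j = Max (set B))"

definition fpf_conf :: "real list \<Rightarrow> nat set" where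
  "fpf_conf B = (if B = [] then {} else {top_idx B})"

definition fpf_pay :: "real list \<Rightarrow> nat \<Rightarrow> real" where
  "fpf_pay B j = (if j \<in> fpf_conf B \<and> length B \<ge> 2 then B ! j else 0)"

definition fpf_rev :: "real list \<Rightarrow> real" where
  "fpf_rev B = (\<Sum>j\<in>fpf_conf B. fpf_pay B j)"

definition first_price_or_free :: tfm where
  "first_price_or_free =
     \<lparr> incl = (\<lambda>bids. [0..<length bids]), conf = fpf_conf, pay = fpf_pay, mrev = fpf_rev \<rparr>"

end

theory Submission
  imports Defs
begin

lemma top_idx_props:
  assumes "B \<noteq> []"
  shows "top_idx B < length B \<and> B ! top_idx B = Max (set B)"
proof -
  have "Max (set B) \<in> set B" using assms by simp
  then obtain j where "j < length B \<and> B ! j = Max (set B)" by (metis in_set_conv_nth)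
  then show ?thesis unfolding top_idx_def by (rule LeastI)
qed

lemma coal_fpf:
  assumes "T \<noteq> []"
  shows "coal_util first_price_or_free vs T =
    (case fst (T ! top_idx (map snd T)) of Member i \<Rightarrow> vs ! i | Fake \<Rightarrow> 0
       | Other \<Rightarrow> fpf_pay (map snd T) (top_idx (map snd T)))"
proof -
  let ?B = "map snd T" let ?k = "top_idx ?B"
  have B: "?B \<noteq> []" using assms by simp
  have k: "?k < length T" using top_idx_props[OF B] by simp
  have cf: "fpf_conf ?B = {?k}" using B by (simp add: fpf_conf_def)
  have set: "{j \<in> fpf_conf ?B. j < length T} = {?k}" using cf k by auto
  have set2: "{j. j = ?k \<and> j < length T} = {?k}" using k by auto
  show ?thesis unfolding coal_util_def first_price_or_free_def
    by (simp add: Let_def set set2 fpf_rev_def cf split: owner.split)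
qed

lemma coal_empty: "coal_util first_price_or_free vs [] = 0"
  unfolding coal_util_def first_price_or_free_def
  by (simp add: fpf_rev_def fpf_conf_def)

theorem mainTheorem9:
  fixes c :: nat
  assumes "c \<ge> 1"
  shows "c_SCP first_price_or_free c"
  unfolding c_SCP_def
proof (intro allI impI)
  fix others vs bs fs T
  assume oth: "\<forall>b\<in>set others. b \<ge> (0::real)" and l1: "1 \<le> length vs"
    and "length vs \<le> c" and vsn: "\<forall>v\<in>set vs. v \<ge> (0::real)" and lbs: "length bs = length vs"
    and "\<forall>b\<in>set bs. b \<ge> (0::real)" and "\<forall>b\<in>set fs. b \<ge> (0::real)"
    and sub: "mset T \<subseteq># mset (available bs others fs)"
  define S where "S = map (\<lambda>i. (Member i, vs ! i)) [0..<length vs] @ map (\<lambda>b. (Other, b)) others"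
  define M where "M = Max (set (vs @ others))"
  have mapS: "map snd S = vs @ others" unfolding S_def by (simp add: map_nth comp_def)
  have fin: "finite (set (vs @ others))" by simp
  have ne: "vs @ others \<noteq> []" using l1 by auto
  have Mge: "\<And>x. x \<in> set (vs @ others) \<Longrightarrow> x \<le> M" unfolding M_def using fin by simp
  have M0: "0 \<le> M" proof -
    have "vs ! 0 \<in> set vs" using l1 by (intro nth_mem) linarith
    then show ?thesis using Mge[of "vs ! 0"] vsn by fastforce
  qed
  have hon: "honest_util first_price_or_free vs others = coal_util first_price_or_free vs S"
  proof -
    have "map (\<lambda>j. S ! j) [0..<length S] = S" by (simp add: map_nth)
    then show ?thesis unfolding honest_util_def S_def[symmetric] first_price_or_free_def
      by (simp add: Let_def mapS[symmetric])
  qed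
  have honM: "coal_util first_price_or_free vs S = M"
  proof -
    have Sne: "S \<noteq> []" using ne mapS by auto
    let ?k = "top_idx (map snd S)"
    have tp: "?k < length (map snd S)" "(map snd S) ! ?k = Max (set (map snd S))"
      using top_idx_props[of "map snd S"] Sne by auto
    have kp: "?k < length S" "snd (S ! ?k) = M"
      using tp unfolding M_def mapS[symmetric] by auto
    show ?thesis
    proof (cases "?k < length vs")
      case True
      then have "S ! ?k = (Member ?k, vs ! ?k)" unfolding S_def by (simp add: nth_append)
      then show ?thesis using coal_fpf[OF Sne, of vs] kp by simp
    next
      case False
      then have eq: "S ! ?k = (Other, others ! (?k - length vs))" using kp(1)
        unfolding S_def by (simp add: nth_append)
      have "length S \<ge> 2" using False kp(1) l1 by (simp add: S_def)
      then have "fpf_pay (map snd S) ?k = M" using kp Sne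
        by (simp add: fpf_pay_def fpf_conf_def)
      then show ?thesis using coal_fpf[OF Sne, of vs] eq by simp
    qed
  qed
  have "coal_util first_price_or_free vs T \<le> M"
  proof (cases "T = []")
    case True then show ?thesis using coal_empty M0 by simp
  next
    case False
    let ?k = "top_idx (map snd T)"
    have k: "?k < length T" using top_idx_props[of "map snd T"] False by simp
    have mem: "T ! ?k \<in> set (available bs others fs)"
      using k sub by (metis mset_subset_eqD nth_mem set_mset_mset)
    show ?thesis
    proof (cases "fst (T ! ?k)")
      case Other
      then have "snd (T ! ?k) \<in> set others" using mem unfolding available_def by auto
      then have "snd (T ! ?k) \<le> M" using Mge by simp
      moreover have "fpf_pay (map snd T) ?k \<le> snd (T ! ?k) \<or> fpf_pay (map snd T) ?k = 0"
        using k by (simp add: fpf_pay_def)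
      ultimately show ?thesis using coal_fpf[OF False, of vs] Other M0 by auto
    next
      case (Member i)
      then have "i < length vs" using mem lbs unfolding available_def by auto
      then have "vs ! i \<le> M" using Mge by simp
      then show ?thesis using coal_fpf[OF False, of vs] Member by simp
    next
      case Fake
      then show ?thesis using coal_fpf[OF False, of vs] M0 by simp
    qed
  qed
  then show "coal_util first_price_or_free vs T \<le> honest_util first_price_or_free vs others"
    using hon honM by simp
qed

end
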